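(* Let $\lambda,\mu$ be partitions and $j\in\mathbb Z$. Suppose $\mu$ has an addable node $\mathfrak m$ in column $j$ but $\lambda$ has no addable node in column $j$, and let $\mu^+=\mu\cup\{\mathfrak m\}$. Then $\mathrm i_{\lambda\mu}=\mathrm i_{\lambda\mu^+}$.
   Context: Partitions are identified with Young diagrams $\{(a,b)\in\mathbb N^2:b\le\lambda_a\}$; nodes are elements of $\mathbb N^2$; $(a,b)$ has height $a+b$ and lies in column $b-a$ (smaller column = further left). Neighbours: $\mathtt{NE}(\mathfrak n)=\mathfrak n+(0,1)$, $\mathtt{SE}(\mathfrak n)=\mathfrak n-(1,0)$, $\mathtt{N}(\mathfrak n)=\mathfrak n+(1,1)$. An addable node of $\lambda$ is a node not in $\lambda$ whose addition gives a partition. A tile is a finite nonempty set of nodes orderable $\mathfrak n_1,\dots,\mathfrak n_r$ with $\mathfrak n_{i+1}\in\{\mathtt{NE}(\mathfrak n_i),\mathtt{SE}(\mathfrak n_i)\}$, with start (leftmost node) and end (rightmost node); it is a Dyck tile if its start and end both attain the maximal height of its nodes. A Dyck tiling of $\lambda\setminus\mu$ (for $\lambda\supseteq\mu$) is a partition of $\lambda\setminus\mu$ into Dyck tiles. It is cover-inclusive if whenever $\mathfrak a$ and $\mathtt N(\mathfrak a)$ both lie in $\lambda\setminus\mu$, the tile containing $\mathtt N(\mathfrak a)$ starts weakly to the left of, and ends weakly to the right of, the tile containing $\mathfrak a$. $\mathrm i_{\lambda\mu}$ is the number of cover-inclusive Dyck tilings of $\lambda\setminus\mu$ if $\lambda\supseteq\mu$,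 and $0$ otherwise. *)

theory Defs
  imports Main
begin

type_synonym node = "nat \<times> nat"

definition is_node :: "node \<Rightarrow> bool" where
  "is_node n \<longleftrightarrow> fst n \<ge> 1 \<and> snd n \<ge> 1"

definition height :: "node \<Rightarrow> nat" where
  "height n = fst n + snd n"

definition col :: "node \<Rightarrow> int" where
  "col n = int (snd n) - int (fst n)"

definition NE :: "node \<Rightarrow> node" where
  "NE n = (fst n, snd n + 1)"

definition N :: "node \<Rightarrow> node" where
  "N n = (fst n + 1, snd n + 1)"

text \<open>m = SE(n), i.e. m = n - (1,0), written without truncated subtraction.\<close>
definition is_SE :: "node \<Rightarrow> node \<Rightarrow> bool" where
  "is_SE n m \<longleftrightarrow> fst m + 1 = fst n \<and> snd m = snd n"

text \<open>Young diagram {(a,b) : 1 \<le> b \<le> lambda_a} of a partition: a finite set of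
  nodes closed downwards in both coordinates.\<close>
definition is_partition :: "node set \<Rightarrow> bool" where
  "is_partition P \<longleftrightarrow> finite P \<and> (\<forall>n\<in>P. is_node n) \<and>
     (\<forall>a b a' b'. (a, b) \<in> P \<longrightarrow> 1 \<le> a' \<longrightarrow> a' \<le> a \<longrightarrow> 1 \<le> b' \<longrightarrow> b' \<le> b \<longrightarrow> (a', b') \<in> P)"

definition addable :: "node set \<Rightarrow> node \<Rightarrow> bool" where
  "addable P n \<longleftrightarrow> is_node n \<and> n \<notin> P \<and> is_partition (insert n P)"

definition is_tile :: "node set \<Rightarrow> bool" where
  "is_tile T \<longleftrightarrow> (\<forall>n\<in>T. is_node n) \<and>
     (\<exists>xs. xs \<noteq> [] \<and> set xs = T \<and>
        (\<forall>i. Suc i < length xs \<longrightarrow> (xs ! Suc i = NE (xs ! i) \<or> is_SE (xs ! i) (xs ! Suc i))))"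

definition tile_start :: "node set \<Rightarrow> node" where
  "tile_start T = (THE n. n \<in> T \<and> (\<forall>m\<in>T. col n \<le> col m))"

definition tile_end :: "node set \<Rightarrow> node" where
  "tile_end T = (THE n. n \<in> T \<and> (\<forall>m\<in>T. col m \<le> col n))"

definition is_dyck_tile :: "node set \<Rightarrow> bool" where
  "is_dyck_tile T \<longleftrightarrow> is_tile T \<and>
     height (tile_start T) = Max (height ` T) \<and> height (tile_end T) = Max (height ` T)"

definition is_dyck_tiling :: "node set \<Rightarrow> node set set \<Rightarrow> bool" where
  "is_dyck_tiling S D \<longleftrightarrow> (\<forall>T\<in>D. is_dyck_tile T) \<and> \<Union>D = S \<and>
     (\<forall>T1\<in>D. \<forall>T2\<in>D. T1 \<noteq> T2 \<longrightarrow> T1 \<inter> T2 = {})"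

definition cover_inclusive :: "node set \<Rightarrow> node set set \<Rightarrow> bool" where
  "cover_inclusive S D \<longleftrightarrow>
     (\<forall>a. a \<in> S \<longrightarrow> N a \<in> S \<longrightarrow>
        (\<forall>T\<in>D. \<forall>T'\<in>D. a \<in> T \<longrightarrow> N a \<in> T' \<longrightarrow>
           col (tile_start T') \<le> col (tile_start T) \<and> col (tile_end T) \<le> col (tile_end T')))"

definition ci_dyck_tilings :: "node set \<Rightarrow> node set \<Rightarrow> node set set set" where
  "ci_dyck_tilings lam mu = {D. is_dyck_tiling (lam - mu) D \<and> cover_inclusive (lam - mu) D}"

definition i_num :: "node set \<Rightarrow> node set \<Rightarrow> nat" where
  "i_num lam mu = (if mu \<subseteq> lam then card (ci_dyck_tilings lam mu) else 0)"

end

theory Submission imports Defs begin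
lemma part_closed:
  assumes "is_partition P" "(c,d) \<in> P" "1 \<le> c'" "c' \<le> c" "1 \<le> d'" "d' \<le> d"
  shows "(c',d') \<in> P"
  using assms unfolding is_partition_def by blast

definition good :: "node set \<Rightarrow> node list \<Rightarrow> bool" where
  "good T xs \<longleftrightarrow> xs \<noteq> [] \<and> set xs = T \<and>
    (\<forall>i<length xs. col (xs!i) = col (xs!0) + int i) \<and>
    (\<forall>i. Suc i < length xs \<longrightarrow> (xs ! Suc i = NE (xs ! i) \<or> is_SE (xs ! i) (xs ! Suc i)))"

lemma tile_good:
  assumes "is_tile T"
  shows "\<exists>xs. good T xs"
proof -
  obtain xs where xs: "xs \<noteq> []" "set xs = T"
    "\<forall>i. Suc i < length xs \<longrightarrow> (xs ! Suc i = NE (xs ! i) \<or> is_SE (xs ! i) (xs ! Suc i))"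
    using assms unfolding is_tile_def by blast
  have "\<forall>i<length xs. col (xs!i) = col (xs!0) + int i"
  proof (intro allI impI)
    fix i assume "i < length xs"
    then show "col (xs!i) = col (xs!0) + int i"
    proof (induction i)
      case 0 then show ?case by simp
    next
      case (Suc i)
      then have "col (xs ! Suc i) = col (xs ! i) + 1"
        using xs(3) by (auto simp: col_def NE_def is_SE_def)
      with Suc show ?case by simp
    qed
  qed
  with xs show ?thesis unfolding good_def by blast
qed

lemma good_col:
  assumes "good T xs" "y \<in> T"
  obtains i where "i < length xs" "y = xs!i" "col y = col (xs!0) + int i"
proof -
  have "y \<in> set xs" using assms unfolding good_def by simp
  then obtain i where i: "i < length xs" "y = xs!i" by (auto simp: in_set_conv_nth)
  have "col (xs!i) = col (xs!0) + int i" using assms(1) i(1) unfolding good_def by blast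
  then show ?thesis using that i by simp
qed

lemma good_mem: "good T xs \<Longrightarrow> i < length xs \<Longrightarrow> xs!i \<in> T"
  unfolding good_def by auto

lemma good_inj:
  assumes "good T xs" "x \<in> T" "y \<in> T" "col x = col y"
  shows "x = y"
proof -
  obtain i where i: "i < length xs" "x = xs!i" "col x = col (xs!0) + int i" using good_col[OF assms(1,2)] .
  obtain k where k: "k < length xs" "y = xs!k" "col y = col (xs!0) + int k" using good_col[OF assms(1,3)] .
  have "int i = int k" using i(3) k(3) assms(4) by simp
  then have "i = k" by simp
  then show ?thesis using i k by simp
qed

lemma tile_inj:
  assumes "is_tile T" "x \<in> T" "y \<in> T" "col x = col y"
  shows "x = y"
  using tile_good[OF assms(1)] good_inj assms(2-4) by blast

lemma good_bounds:
  assumes "good T xs" "y \<in> T"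
  shows "col (xs!0) \<le> col y" "col y \<le> col (xs!(length xs - 1))"
proof -
  obtain i where i: "i < length xs" "y = xs!i" "col y = col (xs!0) + int i" using good_col[OF assms] .
  have ne: "xs \<noteq> []" using assms(1) unfolding good_def by simp
  have h: "\<forall>i<length xs. col (xs!i) = col (xs!0) + int i" using assms(1) unfolding good_def by blast
  have "length xs - 1 < length xs" using ne by simp
  then have "col (xs!(length xs - 1)) = col (xs!0) + int (length xs - 1)"
    using h by blast
  then show "col (xs!0) \<le> col y" "col y \<le> col (xs!(length xs - 1))" using i by auto
qed

lemma good_start:
  assumes "good T xs"
  shows "tile_start T = xs!0"
  unfolding tile_start_def
proof (rule the_equality)
  have ne: "xs \<noteq> []" using assms(1) unfolding good_def by simp
  show "xs ! 0 \<in> T \<and> (\<forall>m\<in>T. col (xs ! 0) \<le> col m)"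
    using good_mem[OF assms, of 0] ne good_bounds(1)[OF assms] by auto
next
  fix n assume n: "n \<in> T \<and> (\<forall>m\<in>T. col n \<le> col m)"
  have ne: "xs \<noteq> []" using assms(1) unfolding good_def by simp
  have x0: "xs!0 \<in> T" using good_mem[OF assms, of 0] ne by auto
  have "col n \<le> col (xs!0)" using n x0 by auto
  moreover have "col (xs!0) \<le> col n" using good_bounds(1)[OF assms] n by auto
  ultimately have "col n = col (xs!0)" by simp
  then show "n = xs!0" using good_inj[OF assms, of n "xs!0"] n x0 by blast
qed

lemma good_end:
  assumes "good T xs"
  shows "tile_end T = xs!(length xs - 1)"
  unfolding tile_end_def
proof (rule the_equality)
  have ne: "xs \<noteq> []" using assms(1) unfolding good_def by simp
  show "xs!(length xs - 1) \<in> T \<and> (\<forall>m\<in>T. col m \<le> col (xs!(length xs - 1)))"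
    using good_mem[OF assms, of "length xs - 1"] ne good_bounds(2)[OF assms] by auto
next
  fix n assume n: "n \<in> T \<and> (\<forall>m\<in>T. col m \<le> col n)"
  have ne: "xs \<noteq> []" using assms(1) unfolding good_def by simp
  have x0: "xs!(length xs - 1) \<in> T" using good_mem[OF assms, of "length xs - 1"] ne by auto
  have "col (xs!(length xs - 1)) \<le> col n" using n x0 by auto
  moreover have "col n \<le> col (xs!(length xs - 1))" using good_bounds(2)[OF assms] n by auto
  ultimately have "col n = col (xs!(length xs - 1))" by simp
  then show "n = xs!(length xs - 1)" using good_inj[OF assms, of n "xs!(length xs - 1)"] n x0 by blast
qed

lemma tile_start_prop:
  assumes "is_tile T"
  shows "tile_start T \<in> T" "\<And>y. y \<in> T \<Longrightarrow> col (tile_start T) \<le> col y"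
proof -
  obtain xs where g: "good T xs" using tile_good[OF assms] by blast
  have ne: "xs \<noteq> []" using g unfolding good_def by simp
  show "tile_start T \<in> T" using good_start[OF g] good_mem[OF g, of 0] ne by auto
  fix y assume "y \<in> T"
  then show "col (tile_start T) \<le> col y" using good_start[OF g] good_bounds(1)[OF g] by auto
qed

lemma tile_end_prop:
  assumes "is_tile T"
  shows "tile_end T \<in> T" "\<And>y. y \<in> T \<Longrightarrow> col y \<le> col (tile_end T)"
proof -
  obtain xs where g: "good T xs" using tile_good[OF assms] by blast
  have ne: "xs \<noteq> []" using g unfolding good_def by simp
  show "tile_end T \<in> T" using good_end[OF g] good_mem[OF g, of "length xs - 1"] ne by auto
  fix y assume "y \<in> T"
  then show "col y \<le> col (tile_end T)" using good_end[OF g] good_bounds(2)[OF g] by auto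
qed

lemma tile_pred:
  assumes "is_tile T" "x \<in> T" "x \<noteq> tile_start T"
  shows "(snd x \<ge> 2 \<and> (fst x, snd x - 1) \<in> T) \<or> (fst x + 1, snd x) \<in> T"
proof -
  obtain xs where g: "good T xs" using tile_good[OF assms(1)] by blast
  have xs: "xs \<noteq> []" "set xs = T"
    "\<forall>i. Suc i < length xs \<longrightarrow> (xs ! Suc i = NE (xs ! i) \<or> is_SE (xs ! i) (xs ! Suc i))"
    "tile_start T = xs!0"
    using g good_start[OF g] unfolding good_def by auto
  obtain i where i: "i < length xs" "x = xs!i" using xs(2) assms(2) by (auto simp: in_set_conv_nth)
  then obtain k where k: "i = Suc k" using assms(3) xs(4) by (cases i) auto
  have p: "xs!k \<in> T" using xs(2) i k by auto
  have "x = NE (xs!k) \<or> is_SE (xs!k) x" using xs(3) i k by auto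
  then show ?thesis
  proof
    assume "x = NE (xs!k)"
    then have "xs!k = (fst x, snd x - 1)" "snd x \<ge> 2"
      using assms(1) p unfolding NE_def is_tile_def is_node_def by (auto simp: prod_eq_iff)
    then show ?thesis using p by auto
  next
    assume "is_SE (xs!k) x"
    then have "xs!k = (fst x + 1, snd x)" unfolding is_SE_def by (auto simp: prod_eq_iff)
    then show ?thesis using p by auto
  qed
qed

lemma tile_succ:
  assumes "is_tile T" "x \<in> T" "x \<noteq> tile_end T"
  shows "(fst x, snd x + 1) \<in> T \<or> (fst x \<ge> 2 \<and> (fst x - 1, snd x) \<in> T)"
proof -
  obtain xs where g: "good T xs" using tile_good[OF assms(1)] by blast
  have xs: "xs \<noteq> []" "set xs = T"
    "\<forall>i. Suc i < length xs \<longrightarrow> (xs ! Suc i = NE (xs ! i) \<or> is_SE (xs ! i) (xs ! Suc i))"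
    "tile_end T = xs!(length xs - 1)"
    using g good_end[OF g] unfolding good_def by auto
  obtain i where i: "i < length xs" "x = xs!i" using xs(2) assms(2) by (auto simp: in_set_conv_nth)
  have si: "Suc i < length xs"
  proof (rule ccontr)
    assume "\<not> Suc i < length xs"
    then have "i = length xs - 1" using i(1) by simp
    then show False using assms(3) xs(4) i(2) by simp
  qed
  have p: "xs!Suc i \<in> T" using xs(2) si by auto
  have "xs!Suc i = NE x \<or> is_SE x (xs!Suc i)" using xs(3) i si by auto
  then show ?thesis
  proof
    assume "xs!Suc i = NE x"
    then show ?thesis using p by (auto simp: NE_def)
  next
    assume "is_SE x (xs!Suc i)"
    then have "xs!Suc i = (fst x - 1, snd x)" "fst x \<ge> 2"
      using assms(1) p unfolding is_SE_def is_tile_def is_node_def by (auto simp: prod_eq_iff)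
    then show ?thesis using p by auto
  qed
qed

lemma dyck_height:
  assumes "is_dyck_tile T" "y \<in> T"
  shows "height y \<le> height (tile_start T)" "height y \<le> height (tile_end T)"
proof -
  have "finite T" using assms(1) unfolding is_dyck_tile_def is_tile_def by auto
  then have "height y \<le> Max (height ` T)" using assms(2) by auto
  then show "height y \<le> height (tile_start T)" "height y \<le> height (tile_end T)"
    using assms(1) unfolding is_dyck_tile_def by auto
qed

definition valley :: "node set \<Rightarrow> node \<Rightarrow> bool" where
  "valley T x \<longleftrightarrow> x \<in> T \<and> (fst x + 1, snd x) \<in> T \<and> (fst x, snd x + 1) \<in> T"

lemma m_in_lam:
  assumes "is_partition lam" "addable mu m" "mu \<subseteq> lam"
    "\<not> (\<exists>n. addable lam n \<and> col n = col m)"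
  shows "m \<in> lam"
proof (rule ccontr)
  assume nm: "m \<notin> lam"
  have pm: "is_partition (insert m mu)" and nd: "is_node m" using assms(2) unfolding addable_def by auto
  have "is_partition (insert m lam)"
    unfolding is_partition_def
  proof (intro conjI allI impI ballI)
    show "finite (insert m lam)" using assms(1) unfolding is_partition_def by auto
    fix n assume "n \<in> insert m lam" then show "is_node n"
      using nd assms(1) unfolding is_partition_def by auto
  next
    fix a b a' b' assume h: "(a, b) \<in> insert m lam" "1 \<le> a'" "a' \<le> a" "1 \<le> b'" "b' \<le> b"
    show "(a', b') \<in> insert m lam"
    proof (cases "(a,b) = m")
      case True
      then have "(a',b') \<in> insert m mu" using part_closed[OF pm, of a b a' b'] h by auto
      then show ?thesis using assms(3) by auto
    next
      case False
      then show ?thesis using part_closed[OF assms(1), of a b a' b'] h by auto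
    qed
  qed
  then have "addable lam m" using nd nm unfolding addable_def by auto
  then show False using assms(4) by blast
qed

lemma single_m:
  assumes lp: "is_partition lam" and mp: "is_partition mu" and ad: "addable mu m"
    and sub: "mu \<subseteq> lam"
    and na: "\<not> (\<exists>n. addable lam n \<and> col n = col m)"
    and D: "D \<in> ci_dyck_tilings lam mu"
  shows "{m} \<in> D"
proof -
  obtain a b where mab: "m = (a,b)" by fastforce
  have pm: "is_partition (insert m mu)" and nd: "is_node m" and mmu: "m \<notin> mu"
    using ad unfolding addable_def by auto
  have a1: "a \<ge> 1" "b \<ge> 1" using nd mab unfolding is_node_def by auto
  have mlam: "m \<in> lam" using m_in_lam[OF lp ad sub na] .
  have dt: "is_dyck_tiling (lam - mu) D" and ci: "cover_inclusive (lam - mu) D"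
    using D unfolding ci_dyck_tilings_def by auto
  have tiles: "\<And>T. T \<in> D \<Longrightarrow> is_dyck_tile T" and un: "\<Union>D = lam - mu"
    and dis: "\<And>T1 T2. T1 \<in> D \<Longrightarrow> T2 \<in> D \<Longrightarrow> T1 \<noteq> T2 \<Longrightarrow> T1 \<inter> T2 = {}"
    using dt unfolding is_dyck_tiling_def by auto
  have istile: "\<And>T. T \<in> D \<Longrightarrow> is_tile T" using tiles unfolding is_dyck_tile_def by auto
  have sub2: "\<And>T. T \<in> D \<Longrightarrow> T \<subseteq> lam - mu" using un by auto
  have lowmu: "\<And>c d. (c,d) \<in> insert m mu \<Longrightarrow> (c,d) \<noteq> m \<Longrightarrow> (c,d) \<in> mu" by auto
  obtain T where T: "T \<in> D" "m \<in> T" using un mlam mmu by auto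
  have valley0: "valley T m" if ne: "T \<noteq> {m}"
  proof -
    have tt: "is_tile T" using istile T(1) .
    have leftmu: "\<not> (snd m \<ge> 2 \<and> (fst m, snd m - 1) \<in> T)"
    proof
      assume h: "snd m \<ge> 2 \<and> (fst m, snd m - 1) \<in> T"
      have "(a, b - 1) \<in> insert m mu" by (rule part_closed[OF pm, of a b]) (use mab a1 h in auto)
      then have "(a, b - 1) \<in> mu" using mab h by auto
      then show False using h sub2[OF T(1)] mab by auto
    qed
    have rightmu: "\<not> (fst m \<ge> 2 \<and> (fst m - 1, snd m) \<in> T)"
    proof
      assume h: "fst m \<ge> 2 \<and> (fst m - 1, snd m) \<in> T"
      have "(a - 1, b) \<in> insert m mu" by (rule part_closed[OF pm, of a b]) (use mab a1 h in auto)
      then have "(a - 1, b) \<in> mu" using mab h by auto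
      then show False using h sub2[OF T(1)] mab by auto
    qed
    have ns: "m \<noteq> tile_start T"
    proof
      assume s: "m = tile_start T"
      have "m \<noteq> tile_end T"
      proof
        assume e: "m = tile_end T"
        have "T \<subseteq> {m}"
        proof
          fix y assume "y \<in> T"
          then have "col y = col m" using tile_start_prop(2)[OF tt \<open>y \<in> T\<close>] tile_end_prop(2)[OF tt \<open>y \<in> T\<close>] s[symmetric] e[symmetric]
            by simp
          then show "y \<in> {m}" using tile_inj[OF tt \<open>y \<in> T\<close> T(2)] by auto
        qed
        then show False using ne T(2) by auto
      qed
      then have "(fst m, snd m + 1) \<in> T" using tile_succ[OF tt T(2)] rightmu by auto
      then have "height (fst m, snd m + 1) \<le> height (tile_start T)" using dyck_height tiles T(1) by blast
      then show False using s by (simp add: height_def)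
    qed
    then have l: "(fst m + 1, snd m) \<in> T" using tile_pred[OF tt T(2)] leftmu by auto
    then have "height (fst m + 1, snd m) \<le> height (tile_end T)" using dyck_height tiles T(1) by blast
    then have "m \<noteq> tile_end T" by (auto simp: height_def)
    then have r: "(fst m, snd m + 1) \<in> T" using tile_succ[OF tt T(2)] rightmu by auto
    show ?thesis using l r T(2) unfolding valley_def by auto
  qed
  have main: "(a+i, b+i) \<in> lam \<and> (\<exists>T\<in>D. valley T (a+i, b+i))" if ne: "T \<noteq> {m}" for i
  proof (induction i)
    case 0 then show ?case using mlam mab valley0[OF ne] T(1) by auto
  next
    case (Suc i)
    then obtain T1 where T1: "T1 \<in> D" "valley T1 (a+i,b+i)" and xl: "(a+i,b+i) \<in> lam" by auto
    let ?x = "(a+i,b+i)"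
    let ?y = "(a+i+1,b+i+1)"
    have v1: "?x \<in> T1" "(a+i+1,b+i) \<in> T1" "(a+i,b+i+1) \<in> T1" using T1(2) unfolding valley_def by auto
    have yl: "?y \<in> lam"
    proof (rule ccontr)
      assume nyl: "?y \<notin> lam"
      have "is_partition (insert ?y lam)"
        unfolding is_partition_def
      proof (intro conjI allI impI ballI)
        show "finite (insert ?y lam)" using lp unfolding is_partition_def by auto
        fix n assume "n \<in> insert ?y lam" then show "is_node n"
          using lp a1 unfolding is_partition_def is_node_def by auto
      next
        fix c d c' d' assume h: "(c, d) \<in> insert ?y lam" "1 \<le> c'" "c' \<le> c" "1 \<le> d'" "d' \<le> d"
        show "(c', d') \<in> insert ?y lam"
        proof (cases "(c,d) = ?y")
          case True
          show ?thesis
          proof (cases "c' \<le> a + i")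
            case True
            have "(a+i,b+i+1) \<in> lam" using v1 sub2[OF T1(1)] by auto
            then show ?thesis using part_closed[OF lp, of "a+i" "b+i+1" c' d'] h \<open>(c,d) = ?y\<close> True by auto
          next
            case False
            show ?thesis
            proof (cases "d' \<le> b + i")
              case True
              have "(a+i+1,b+i) \<in> lam" using v1 sub2[OF T1(1)] by auto
              then show ?thesis using part_closed[OF lp, of "a+i+1" "b+i" c' d'] h \<open>(c,d) = ?y\<close> True by auto
            next
              case False
              then show ?thesis using h \<open>(c,d) = ?y\<close> \<open>\<not> c' \<le> a + i\<close> by auto
            qed
          qed
        next
          case False
          then show ?thesis using part_closed[OF lp, of c d c' d'] h by auto
        qed
      qed
      then have "addable lam ?y" using nyl a1 unfolding addable_def is_node_def by auto
      moreover have "col ?y = col m" using mab by (simp add: col_def)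
      ultimately show False using na by blast
    qed
    have ymu: "?y \<notin> mu"
    proof
      assume "?y \<in> mu"
      then have "m \<in> mu" using part_closed[OF mp, of "a+i+1" "b+i+1" a b] mab a1 by auto
      then show False using mmu by simp
    qed
    have xS: "?x \<in> lam - mu" using v1 sub2[OF T1(1)] by auto
    have yS: "?y \<in> lam - mu" using yl ymu by auto
    have Nx: "N ?x = ?y" by (simp add: N_def)
    obtain T2 where T2: "T2 \<in> D" "?y \<in> T2" using yS un by auto
    have yS': "N ?x \<in> lam - mu" and yT2: "N ?x \<in> T2" using Nx yS T2(2) by auto
    have cc: "col (tile_start T2) \<le> col (tile_start T1)" "col (tile_end T1) \<le> col (tile_end T2)"
      using ci[unfolded cover_inclusive_def, rule_format, OF xS yS' T1(1) T2(1) v1(1) yT2] by auto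
    have t1: "is_tile T1" "is_tile T2" using istile T1(1) T2(1) by auto
    have "col (tile_start T1) \<le> col (a+i+1,b+i)" using tile_start_prop(2)[OF t1(1) v1(2)] .
    then have c1: "col (tile_start T2) \<le> col (a+i+1,b+i)" using cc(1) by linarith
    have ys: "?y \<noteq> tile_start T2"
    proof
      assume e: "?y = tile_start T2"
      then have "col ?y \<le> col (a+i+1,b+i)" using c1 by simp
      then show False by (simp add: col_def)
    qed
    have "col (a+i,b+i+1) \<le> col (tile_end T1)" using tile_end_prop(2)[OF t1(1) v1(3)] .
    then have c2: "col (a+i,b+i+1) \<le> col (tile_end T2)" using cc(2) by linarith
    have ye: "?y \<noteq> tile_end T2"
    proof
      assume e: "?y = tile_end T2"
      then have "col (a+i,b+i+1) \<le> col ?y" using c2 by simp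
      then show False by (simp add: col_def)
    qed
    have "T1 \<noteq> T2"
    proof
      assume "T1 = T2"
      then have "?x = ?y" using tile_inj[OF t1(1) v1(1)] T2(2) by (simp add: col_def)
      then show False by simp
    qed
    then have d12: "T1 \<inter> T2 = {}" using dis T1(1) T2(1) by auto
    have p0: "(a+i+1, b+i) \<in> T2 \<or> (a+i+1+1, b+i+1) \<in> T2"
      using tile_pred[OF t1(2) T2(2) ys] by auto
    have p: "(a+i+1+1, b+i+1) \<in> T2" using p0 d12 v1(2) by blast
    have q0: "(a+i+1, b+i+1+1) \<in> T2 \<or> (a+i, b+i+1) \<in> T2"
      using tile_succ[OF t1(2) T2(2) ye] by auto
    have q: "(a+i+1, b+i+1+1) \<in> T2" using q0 d12 v1(3) by blast
    have vy: "valley T2 ?y" using p q T2(2) unfolding valley_def by simp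
    have e: "(a + Suc i, b + Suc i) = ?y" by simp
    show ?case unfolding e using yl T2(1) vy by blast
  qed
  show ?thesis
  proof (rule ccontr)
    assume "{m} \<notin> D"
    then have ne: "T \<noteq> {m}" using T by auto
    have fin: "finite lam" using lp unfolding is_partition_def by auto
    define k where "k = Max (fst ` lam)"
    have "(a + (k+1), b + (k+1)) \<in> lam" using main[OF ne] by blast
    then have "fst (a + (k+1), b + (k+1)) \<in> fst ` lam" by (rule imageI)
    then have "fst (a + (k+1), b + (k+1)) \<le> k" unfolding k_def using Max_ge[OF finite_imageI[OF fin]] by blast
    then show False by simp
  qed
qed

theorem proposition3p3:
  fixes lam mu :: "node set" and j :: int and m :: node
  assumes "is_partition lam" and "is_partition mu"
    and "addable mu m" and "col m = j"
    and "\<not> (\<exists>n. addable lam n \<and> col n = j)"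
  shows "i_num lam mu = i_num lam (insert m mu)"
proof (cases "mu \<subseteq> lam")
  case False
  then show ?thesis unfolding i_num_def by auto
next
  case sub: True
  have na: "\<not> (\<exists>n. addable lam n \<and> col n = col m)" using assms(4,5) by simp
  have mlam: "m \<in> lam" using m_in_lam[OF assms(1,3) sub na] .
  have mmu: "m \<notin> mu" and nd: "is_node m" and pm: "is_partition (insert m mu)"
    using assms(3) unfolding addable_def by auto
  have sub': "insert m mu \<subseteq> lam" using sub mlam by auto
  let ?S = "lam - mu"
  have S': "lam - insert m mu = ?S - {m}" by auto
  have mS: "m \<in> ?S" using mlam mmu by auto
  have st1: "tile_start {m} = m" unfolding tile_start_def by (rule the_equality) auto
  have en1: "tile_end {m} = m" unfolding tile_end_def by (rule the_equality) auto
  have dm: "is_dyck_tile {m}"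
    unfolding is_dyck_tile_def is_tile_def st1 en1
    using nd by (auto intro!: exI[of _ "[m]"])
  have fwd: "D - {{m}} \<in> ci_dyck_tilings lam (insert m mu)" if D: "D \<in> ci_dyck_tilings lam mu" for D
  proof -
    have md: "{m} \<in> D" using single_m[OF assms(1,2,3) sub na D] .
    have dt: "is_dyck_tiling ?S D" and ci: "cover_inclusive ?S D"
      using D unfolding ci_dyck_tilings_def by auto
    have un: "\<Union>D = ?S" and dis: "\<And>T1 T2. T1 \<in> D \<Longrightarrow> T2 \<in> D \<Longrightarrow> T1 \<noteq> T2 \<Longrightarrow> T1 \<inter> T2 = {}"
      and tl: "\<forall>T\<in>D. is_dyck_tile T"
      using dt unfolding is_dyck_tiling_def by auto
    have "\<Union>(D - {{m}}) = ?S - {m}"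
    proof
      show "\<Union>(D - {{m}}) \<subseteq> ?S - {m}"
      proof
        fix x assume "x \<in> \<Union>(D - {{m}})"
        then obtain T where T: "T \<in> D" "T \<noteq> {m}" "x \<in> T" by auto
        have "T \<inter> {m} = {}" using dis[OF T(1) md T(2)] .
        then show "x \<in> ?S - {m}" using T un by auto
      qed
      show "?S - {m} \<subseteq> \<Union>(D - {{m}})" using un by auto
    qed
    then have "is_dyck_tiling (?S - {m}) (D - {{m}})"
      using tl dis unfolding is_dyck_tiling_def by auto
    moreover have "cover_inclusive (?S - {m}) (D - {{m}})"
      using ci unfolding cover_inclusive_def by blast
    ultimately show ?thesis unfolding ci_dyck_tilings_def S' by auto
  qed
  have bwd: "insert {m} D \<in> ci_dyck_tilings lam mu" if D: "D \<in> ci_dyck_tilings lam (insert m mu)" for D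
  proof -
    have dt: "is_dyck_tiling (?S - {m}) D" and ci: "cover_inclusive (?S - {m}) D"
      using D unfolding ci_dyck_tilings_def S' by auto
    have un: "\<Union>D = ?S - {m}" and dis: "\<And>T1 T2. T1 \<in> D \<Longrightarrow> T2 \<in> D \<Longrightarrow> T1 \<noteq> T2 \<Longrightarrow> T1 \<inter> T2 = {}"
      and tl: "\<forall>T\<in>D. is_dyck_tile T"
      using dt unfolding is_dyck_tiling_def by auto
    have nm: "\<And>T. T \<in> D \<Longrightarrow> m \<notin> T" using un by auto
    have "is_dyck_tiling ?S (insert {m} D)"
      unfolding is_dyck_tiling_def
    proof (intro conjI)
      show "\<forall>T\<in>insert {m} D. is_dyck_tile T" using tl dm by auto
      show "\<Union>(insert {m} D) = ?S" using un mS by auto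
      show "\<forall>T1\<in>insert {m} D. \<forall>T2\<in>insert {m} D. T1 \<noteq> T2 \<longrightarrow> T1 \<inter> T2 = {}"
        using dis nm by blast
    qed
    moreover have "cover_inclusive ?S (insert {m} D)"
      unfolding cover_inclusive_def
    proof (intro allI impI ballI)
      fix a T T' assume h: "a \<in> ?S" "N a \<in> ?S" "T \<in> insert {m} D" "T' \<in> insert {m} D" "a \<in> T" "N a \<in> T'"
      have Nne: "N a \<noteq> m"
      proof
        assume e: "N a = m"
        have an: "is_node a" using h(1) assms(1) unfolding is_partition_def by auto
        obtain c d where cd: "a = (c,d)" by fastforce
        have "m = (c+1,d+1)" using e cd by (simp add: N_def)
        then have "a \<in> insert m mu" using part_closed[OF pm, of "c+1" "d+1" c d] an cd
          unfolding is_node_def by auto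
        moreover have "a \<noteq> m" using e cd by (auto simp: N_def)
        ultimately show False using h(1) by auto
      qed
      show "col (tile_start T') \<le> col (tile_start T) \<and> col (tile_end T) \<le> col (tile_end T')"
      proof (cases "T = {m}")
        case True
        then have am: "a = m" using h(5) by auto
        have T'D: "T' \<in> D" using h(4,6) Nne by auto
        have tt: "is_tile T'" using tl T'D unfolding is_dyck_tile_def by auto
        have "col (N a) = col m" using am by (simp add: N_def col_def)
        then show ?thesis using True st1 en1 tile_start_prop(2)[OF tt h(6)] tile_end_prop(2)[OF tt h(6)]
          by simp
      next
        case False
        then have TD: "T \<in> D" using h(3) by auto
        have T'D: "T' \<in> D" using h(4,6) Nne by auto
        have "a \<in> ?S - {m}" "N a \<in> ?S - {m}" using TD T'D h nm by auto
        then show ?thesis using ci TD T'D h(5,6) unfolding cover_inclusive_def by blast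
      qed
    qed
    ultimately show ?thesis unfolding ci_dyck_tilings_def by auto
  qed
  have "bij_betw (\<lambda>D. D - {{m}}) (ci_dyck_tilings lam mu) (ci_dyck_tilings lam (insert m mu))"
  proof (rule bij_betw_byWitness[where f' = "\<lambda>D. insert {m} D"])
    show "\<forall>D\<in>ci_dyck_tilings lam mu. insert {m} (D - {{m}}) = D"
      using single_m[OF assms(1,2,3) sub na] by auto
    show "\<forall>D\<in>ci_dyck_tilings lam (insert m mu). insert {m} D - {{m}} = D"
    proof
      fix D assume D: "D \<in> ci_dyck_tilings lam (insert m mu)"
      then have "\<Union>D = ?S - {m}" unfolding ci_dyck_tilings_def is_dyck_tiling_def S' by auto
      then have "{m} \<notin> D" by auto
      then show "insert {m} D - {{m}} = D" by auto
    qed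
    show "(\<lambda>D. D - {{m}}) ` ci_dyck_tilings lam mu \<subseteq> ci_dyck_tilings lam (insert m mu)" using fwd by auto
    show "insert {m} ` ci_dyck_tilings lam (insert m mu) \<subseteq> ci_dyck_tilings lam mu" using bwd by auto
  qed
  then show ?thesis unfolding i_num_def using sub sub' bij_betw_same_card by auto
qed

end
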